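(* Let $n\ge 2$ be an integer and $A\subseteq L_n$. Then $(X_n,\tau(A))$ is perfect (respectively Lindelöf, respectively $\sigma$-compact) if and only if the subspace $(L_n,\tau(A)|_{L_n})$ is perfect (respectively Lindelöf, respectively $\sigma$-compact).
   Context: For $\overline{x},\overline{a}\in\mathbb R^n$ let $|\overline{x}-\overline{a}|$ be the Euclidean distance and $B(\overline{a},\epsilon)=\{\overline{x}\in\mathbb R^n:|\overline{x}-\overline{a}|<\epsilon\}$. Let $P_n=\{\overline{x}\in\mathbb R^n: x_n>0\}$, $L_n=\{\overline{x}\in\mathbb R^n: x_n=0\}$, $X_n=P_n\cup L_n$. For $\overline{a}\in L_n$ and $\epsilon>0$ put $\overline{a(\epsilon)}=(a_1,\dots,a_{n-1},\epsilon)$ and $\tilde B(\overline{a},\epsilon)=\{\overline{a}\}\cup B(\overline{a(\epsilon)},\epsilon)$. For $A\subseteq L_n$, the topology $\tau(A)$ on $X_n$ is generated by the local bases: at $\overline{a}\in P_n$, the sets $B(\overline{a},\epsilon)$ with $0<\epsilon<a_n$; at $\overline{a}\in A$, the sets $B(\overline{a},\epsilon)\cap X_n$ with $\epsilon>0$; at $\overline{a}\in L_n\setminus A$, the sets $\tilde B(\overline{a},\epsilon)$ with $\epsilon>0$. A space is perfect if every closed set is a $G_\delta$-set. *)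

theory Defs
  imports "HOL-Analysis.Analysis"
begin

text \<open>We model R^n (n \<ge> 2) as (real^'m) \<times> real, where CARD('m) = n - 1 \<ge> 1;
  the last coordinate x_n is the second component. The product metric on this
  type is the Euclidean distance.\<close>

definition Pn :: "((real^'m) \<times> real) set" where
  "Pn = {p. snd p > 0}"

definition Ln :: "((real^'m) \<times> real) set" where
  "Ln = {p. snd p = 0}"

definition Xn :: "((real^'m) \<times> real) set" where
  "Xn = Pn \<union> Ln"

text \<open>The basic neighbourhood of radius e at a point a (for a in Pn it is only
  used with 0 < e < a_n).\<close>
definition basic_nbhd :: "((real^'m) \<times> real) set \<Rightarrow> (real^'m) \<times> real \<Rightarrow> real \<Rightarrow> ((real^'m) \<times> real) set" where
  "basic_nbhd A a e =
     (if a \<in> Pn then ball a e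
      else if a \<in> A then ball a e \<inter> Xn
      else insert a (ball (fst a, e) e))"

definition tauA :: "((real^'m) \<times> real) set \<Rightarrow> ((real^'m) \<times> real) topology" where
  "tauA A = topology (\<lambda>U. U \<subseteq> Xn \<and>
      (\<forall>a\<in>U. \<exists>e>0. (a \<in> Pn \<longrightarrow> e < snd a) \<and> basic_nbhd A a e \<subseteq> U))"

definition perfect_top :: "'a topology \<Rightarrow> bool" where
  "perfect_top X \<longleftrightarrow> (\<forall>S. closedin X S \<longrightarrow> gdelta_in X S)"

definition sigma_compact_top :: "'a topology \<Rightarrow> bool" where
  "sigma_compact_top X \<longleftrightarrow> (countable union_of compactin X) (topspace X)"

end

theory Submission
  imports Defs
begin

lemma snd_close:
  fixes p q :: "(real^'m) \<times> real"
  shows "\<bar>snd p - snd q\<bar> \<le> dist p q"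
  using dist_snd_le[of p q] by (simp add: dist_real_def)

lemma tangent_ball_pos:
  fixes p :: "(real^'m) \<times> real"
  assumes "p \<in> ball (x, e) e"
  shows "snd p > 0 \<and> snd p < 2 * e"
proof -
  have "\<bar>snd p - e\<bar> < e" using snd_close[of p "(x,e)"] assms
    by (simp add: dist_commute)
  then show ?thesis by auto
qed

lemma tangent_ball_mono:
  fixes x :: "real^'m"
  assumes "e1 \<le> e2"
  shows "ball (x, e1) e1 \<subseteq> ball (x, e2) e2"
proof
  fix p assume "p \<in> ball (x, e1) e1"
  then have "dist (x, e2) p \<le> dist (x,e2) (x,e1) + dist (x,e1) p" "dist (x,e1) p < e1"
    by (auto intro: dist_triangle)
  moreover have "dist (x,e2) (x,e1) = e2 - e1" using assms
    by (simp add: dist_Pair_Pair dist_real_def)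
  ultimately show "p \<in> ball (x, e2) e2" by simp
qed

lemma basic_nbhd_mono:
  "e1 \<le> e2 \<Longrightarrow> basic_nbhd A a e1 \<subseteq> basic_nbhd A a e2"
  unfolding basic_nbhd_def using tangent_ball_mono[of e1 e2 "fst a"] by auto

definition OP :: "((real^'m) \<times> real) set \<Rightarrow> ((real^'m) \<times> real) set \<Rightarrow> bool" where
  "OP A U \<longleftrightarrow> U \<subseteq> Xn \<and>
      (\<forall>a\<in>U. \<exists>e>0. (a \<in> Pn \<longrightarrow> e < snd a) \<and> basic_nbhd A a e \<subseteq> U)"

lemma istop: "istopology (OP A)"
  unfolding istopology_def
proof (intro conjI allI impI ballI)
  fix S T assume S: "OP A S" and T: "OP A T"
  show "OP A (S \<inter> T)"
    unfolding OP_def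
  proof (intro conjI ballI)
    show "S \<inter> T \<subseteq> Xn" using S unfolding OP_def by auto
    fix a assume a: "a \<in> S \<inter> T"
    obtain e1 where e1: "e1 > 0" "a \<in> Pn \<longrightarrow> e1 < snd a" "basic_nbhd A a e1 \<subseteq> S"
      using S a unfolding OP_def by blast
    obtain e2 where e2: "e2 > 0" "a \<in> Pn \<longrightarrow> e2 < snd a" "basic_nbhd A a e2 \<subseteq> T"
      using T a unfolding OP_def by blast
    have "basic_nbhd A a (min e1 e2) \<subseteq> S \<inter> T"
      using basic_nbhd_mono[of "min e1 e2" e1 A a] basic_nbhd_mono[of "min e1 e2" e2 A a] e1 e2
      by auto
    then show "\<exists>e>0. (a \<in> Pn \<longrightarrow> e < snd a) \<and> basic_nbhd A a e \<subseteq> S \<inter> T"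
      using e1 e2 by (intro exI[of _ "min e1 e2"]) auto
  qed
next
  fix K assume K: "\<forall>k\<in>K. OP A k"
  show "OP A (\<Union>K)"
    unfolding OP_def
  proof (intro conjI ballI)
    show "\<Union>K \<subseteq> Xn" using K unfolding OP_def by auto
    fix a assume "a \<in> \<Union>K"
    then obtain k where "k \<in> K" "a \<in> k" by blast
    then obtain e where "e > 0" "a \<in> Pn \<longrightarrow> e < snd a" "basic_nbhd A a e \<subseteq> k"
      using K unfolding OP_def by blast
    then show "\<exists>e>0. (a \<in> Pn \<longrightarrow> e < snd a) \<and> basic_nbhd A a e \<subseteq> \<Union>K"
      using \<open>k \<in> K\<close> by blast
  qed
qed

lemma openin_tauA: "openin (tauA A) U \<longleftrightarrow> OP A U"
proof -
  have "tauA A = topology (OP A)" unfolding tauA_def OP_def[abs_def] by simp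
  then show ?thesis using fun_cong[OF topology_inverse'[OF istop[of A]], of U] by simp
qed

lemma Pn_ball:
  fixes a :: "(real^'m) \<times> real"
  assumes "a \<in> Pn" "0 < e" "e \<le> snd a"
  shows "ball a e \<subseteq> Pn"
proof
  fix p assume "p \<in> ball a e"
  then have "\<bar>snd a - snd p\<bar> < e" using snd_close[of a p] by simp
  then show "p \<in> Pn" using assms by (auto simp: Pn_def)
qed

lemma OP_Xn: "OP A (Xn :: ((real^'m) \<times> real) set)"
  unfolding OP_def
proof (intro conjI ballI)
  fix a :: "(real^'m) \<times> real" assume a: "a \<in> Xn"
  show "\<exists>e>0. (a \<in> Pn \<longrightarrow> e < snd a) \<and> basic_nbhd A a e \<subseteq> Xn"
  proof (cases "a \<in> Pn")
    case True
    then have "snd a > 0" by (simp add: Pn_def)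
    then show ?thesis using True Pn_ball[of a "snd a / 2"]
      by (intro exI[of _ "snd a / 2"]) (auto simp: basic_nbhd_def Xn_def)
  next
    case False
    then show ?thesis using a tangent_ball_pos[of _ "fst a" 1]
      by (intro exI[of _ 1]) (auto simp: basic_nbhd_def Xn_def Pn_def)
  qed
qed simp

lemma topspace_tauA: "topspace (tauA A) = (Xn :: ((real^'m) \<times> real) set)"
proof -
  have "topspace (tauA A) = \<Union>{U. openin (tauA A) U}" by (simp add: topspace_def)
  also have "\<dots> = Xn" using OP_Xn[of A] unfolding openin_tauA by (auto simp: OP_def)
  finally show ?thesis .
qed

lemma open_Pn: "open (Pn :: ((real^'m) \<times> real) set)"
  unfolding open_contains_ball
proof
  fix a :: "(real^'m) \<times> real" assume a: "a \<in> Pn"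
  then have "snd a > 0" by (simp add: Pn_def)
  then show "\<exists>e>0. ball a e \<subseteq> Pn" using Pn_ball[OF a] by blast
qed

lemma openin_tauA_Pn:
  fixes A :: "((real^'m) \<times> real) set"
  assumes "U \<subseteq> Pn"
  shows "openin (tauA A) U \<longleftrightarrow> open U"
proof
  assume "openin (tauA A) U"
  then have o: "OP A U" by (simp add: openin_tauA)
  show "open U" unfolding open_contains_ball
  proof
    fix a assume "a \<in> U"
    then obtain e where "e > 0" "basic_nbhd A a e \<subseteq> U" "a \<in> Pn"
      using o assms unfolding OP_def by blast
    then show "\<exists>e>0. ball a e \<subseteq> U" by (auto simp: basic_nbhd_def)
  qed
next
  assume "open U"
  show "openin (tauA A) U" unfolding openin_tauA OP_def
  proof (intro conjI ballI)
    show "U \<subseteq> Xn" using assms by (auto simp: Xn_def)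
    fix a assume a: "a \<in> U"
    then have aP: "a \<in> Pn" using assms by auto
    then have sa: "snd a > 0" by (simp add: Pn_def)
    obtain e where e: "e > 0" "ball a e \<subseteq> U" using \<open>open U\<close> a open_contains_ball by blast
    define d where "d = min e (snd a / 2)"
    have "ball a d \<subseteq> U" using e by (auto simp: d_def)
    then show "\<exists>e>0. (a \<in> Pn \<longrightarrow> e < snd a) \<and> basic_nbhd A a e \<subseteq> U"
      using e sa aP by (intro exI[of _ d]) (auto simp: d_def basic_nbhd_def)
  qed
qed

lemma openin_Pn: "openin (tauA A) (Pn :: ((real^'m) \<times> real) set)"
  using openin_tauA_Pn[of Pn A] open_Pn by simp

lemma sub_Pn: "subtopology (tauA A) Pn = top_of_set (Pn :: ((real^'m) \<times> real) set)"
proof (rule topology_eq[THEN iffD2], intro allI)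
  fix S
  show "openin (subtopology (tauA A) Pn) S \<longleftrightarrow> openin (top_of_set Pn) S"
    using openin_open_subtopology[OF openin_Pn[of A], of S]
      openin_open_subtopology[of euclidean Pn S] open_Pn openin_tauA_Pn[of S A]
    by auto
qed

lemma closedin_Ln: "closedin (tauA A) (Ln :: ((real^'m) \<times> real) set)"
proof -
  have "Xn - Ln = (Pn :: ((real^'m) \<times> real) set)" by (auto simp: Xn_def Pn_def Ln_def)
  then show ?thesis using openin_Pn[of A]
    by (simp add: closedin_def topspace_tauA Xn_def)
qed

lemma openin_strip:
  fixes A :: "((real^'m) \<times> real) set"
  assumes r: "r > 0"
  shows "openin (tauA A) {p \<in> Xn. snd p < r}"
  unfolding openin_tauA OP_def
proof (intro conjI ballI)
  fix a :: "(real^'m) \<times> real" assume a: "a \<in> {p \<in> Xn. snd p < r}"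
  show "\<exists>e>0. (a \<in> Pn \<longrightarrow> e < snd a) \<and> basic_nbhd A a e \<subseteq> {p \<in> Xn. snd p < r}"
  proof (cases "a \<in> Pn")
    case True
    then have sa: "snd a > 0" by (simp add: Pn_def)
    define d where "d = min (snd a / 2) (r - snd a)"
    have d: "d > 0" "d < snd a" using sa a by (auto simp: d_def)
    have "ball a d \<subseteq> {p \<in> Xn. snd p < r}"
    proof
      fix p assume p: "p \<in> ball a d"
      then have "\<bar>snd a - snd p\<bar> < d" using snd_close[of a p] by simp
      moreover have "p \<in> Pn" using Pn_ball[OF True, of d] d p by auto
      ultimately show "p \<in> {p \<in> Xn. snd p < r}" by (auto simp: d_def Xn_def)
    qed
    then show ?thesis using True d by (intro exI[of _ d]) (auto simp: basic_nbhd_def)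
  next
    case False
    then have a0: "snd a = 0" using a by (auto simp: Xn_def Pn_def Ln_def)
    show ?thesis
    proof (cases "a \<in> A")
      case True
      have "ball a r \<inter> Xn \<subseteq> {p \<in> Xn. snd p < r}"
      proof
        fix p assume p: "p \<in> ball a r \<inter> Xn"
        then have "\<bar>snd a - snd p\<bar> < r" using snd_close[of a p] by simp
        then show "p \<in> {p \<in> Xn. snd p < r}" using p a0 by auto
      qed
      then show ?thesis using True False r by (intro exI[of _ r]) (auto simp: basic_nbhd_def)
    next
      case nA: False
      have "insert a (ball (fst a, r/2) (r/2)) \<subseteq> {p \<in> Xn. snd p < r}"
        using a tangent_ball_pos[of _ "fst a" "r/2"] by (auto simp: Xn_def Pn_def)
      then show ?thesis using nA False r by (intro exI[of _ "r/2"]) (auto simp: basic_nbhd_def)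
    qed
  qed
qed auto

lemma gdelta_Ln: "gdelta_in (tauA A) (Ln :: ((real^'m) \<times> real) set)"
proof -
  have eq: "(Ln :: ((real^'m) \<times> real) set) = \<Inter>(range (\<lambda>k::nat. {p \<in> Xn. snd p < 1 / Suc k}))"
  proof (intro equalityI subsetI)
    fix p assume "p \<in> Ln" then show "p \<in> \<Inter>(range (\<lambda>k::nat. {p \<in> Xn. snd p < 1 / Suc k}))"
      by (auto simp: Ln_def Xn_def)
  next
    fix p assume p: "p \<in> \<Inter>(range (\<lambda>k::nat. {p \<in> Xn. snd p < 1 / Suc k}))"
    then have "p \<in> Xn" by auto
    show "p \<in> Ln"
    proof (rule ccontr)
      assume "p \<notin> Ln"
      then have sp: "snd p > 0" using \<open>p \<in> Xn\<close> by (auto simp: Xn_def Pn_def Ln_def)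
      obtain k :: nat where "1 / snd p < k" using reals_Archimedean2 by blast
      then have "1 / Suc k < snd p" using sp
        by (simp add: field_simps) 
      moreover have "snd p < 1 / Suc k" using p by auto
      ultimately show False by simp
    qed
  qed
  show ?thesis
    by (subst eq, rule gdelta_in_Inter) (auto intro!: open_imp_gdelta_in openin_strip)
qed


lemma perfect_fwd:
  fixes A :: "((real^'m) \<times> real) set"
  assumes "perfect_top (tauA A)"
  shows "perfect_top (subtopology (tauA A) Ln)"
  unfolding perfect_top_def
proof (intro allI impI)
  fix S assume S: "closedin (subtopology (tauA A) Ln) S"
  then have "closedin (tauA A) S" using closedin_trans_full closedin_Ln by blast
  then have "gdelta_in (tauA A) S" using assms perfect_top_def by blast
  moreover have "S = S \<inter> Ln" using closedin_imp_subset[OF S] by blast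
  ultimately show "gdelta_in (subtopology (tauA A) Ln) S"
    using gdelta_in_subtopology[THEN iffD2] by blast
qed

lemma perfect_bwd:
  fixes A :: "((real^'m) \<times> real) set"
  assumes L: "perfect_top (subtopology (tauA A) Ln)"
  shows "perfect_top (tauA A)"
  unfolding perfect_top_def
proof (intro allI impI)
  fix F assume F: "closedin (tauA A) F"
  have FX: "F \<subseteq> Xn" using closedin_subset[OF F] topspace_tauA by metis
  have "closedin (subtopology (tauA A) Ln) (F \<inter> Ln)"
    using F closedin_subtopology by blast
  then have "gdelta_in (subtopology (tauA A) Ln) (F \<inter> Ln)" using L perfect_top_def by blast
  then obtain T where T: "gdelta_in (tauA A) T" "F \<inter> Ln = T \<inter> Ln"
    using gdelta_in_subtopology[THEN iffD1] by blast
  have g1: "gdelta_in (tauA A) (F \<inter> Ln)" unfolding T(2) using T(1) gdelta_Ln by (rule gdelta_in_Int)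
  have "closedin (subtopology (tauA A) Pn) (F \<inter> Pn)"
    using F closedin_subtopology by blast
  then have "closedin (top_of_set Pn) (F \<inter> Pn)" by (simp add: sub_Pn)
  then have "gdelta_in (top_of_set Pn) (F \<inter> Pn)"
    by (intro closed_imp_gdelta_in metrizable_space_subtopology metrizable_space_euclidean)
  then have "gdelta_in (subtopology (tauA A) Pn) (F \<inter> Pn)" by (simp add: sub_Pn)
  then obtain T2 where T2: "gdelta_in (tauA A) T2" "F \<inter> Pn = T2 \<inter> Pn"
    using gdelta_in_subtopology[THEN iffD1] by blast
  have g2: "gdelta_in (tauA A) (F \<inter> Pn)"
    unfolding T2(2) using T2(1) open_imp_gdelta_in[OF openin_Pn] by (rule gdelta_in_Int)
  have "F = (F \<inter> Ln) \<union> (F \<inter> Pn)" using FX by (auto simp: Xn_def)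
  also have "gdelta_in (tauA A) \<dots>" using g1 g2 by (rule gdelta_in_Un)
  finally show "gdelta_in (tauA A) F" .
qed

lemma Lindelof_Pn:
  fixes A :: "((real^'m) \<times> real) set"
  shows "Lindelof_space (subtopology (tauA A) Pn)"
proof -
  have PX: "Pn \<subseteq> topspace (tauA A)" by (auto simp: topspace_tauA Xn_def)
  show ?thesis unfolding Lindelof_space_subtopology_subset[OF PX]
  proof (intro allI impI)
    fix U assume U: "(\<forall>u\<in>U. openin (tauA A) u) \<and> Pn \<subseteq> \<Union>U"
    define G where "G = (\<lambda>u. u \<inter> Pn) ` U"
    have "\<And>g. g \<in> G \<Longrightarrow> open g"
      using U openin_tauA_Pn[of _ A] openin_Int[OF _ openin_Pn] unfolding G_def by auto
    then obtain G' where G': "G' \<subseteq> G" "countable G'" "\<Union>G' = \<Union>G" using Lindelof by metis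
    then obtain V where V: "countable V" "V \<subseteq> U" "G' = (\<lambda>u. u \<inter> Pn) ` V"
      using countable_subset_image[of G' "\<lambda>u. u \<inter> Pn" U] unfolding G_def by blast
    have "Pn \<subseteq> \<Union>G" using U unfolding G_def by auto
    then have "Pn \<subseteq> \<Union>V" using G' V by auto
    then show "\<exists>V. countable V \<and> V \<subseteq> U \<and> Pn \<subseteq> \<Union>V" using V by blast
  qed
qed

lemma Lindelof_bwd:
  fixes A :: "((real^'m) \<times> real) set"
  assumes "Lindelof_space (subtopology (tauA A) Ln)"
  shows "Lindelof_space (tauA A)"
proof -
  have "Lindelof_space (subtopology (tauA A) (\<Union>{Ln, Pn}))"
    using assms Lindelof_Pn[of A] by (intro Lindelof_space_Union) auto
  moreover have "\<Union>{Ln, Pn} = topspace (tauA A)" by (auto simp: topspace_tauA Xn_def)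
  ultimately show ?thesis by simp
qed

lemma compact_K:
  "compact {p :: (real^'m) \<times> real. norm p \<le> real k \<and> 1 / Suc k \<le> snd p}"
proof -
  have "{p :: (real^'m) \<times> real. norm p \<le> real k \<and> 1 / Suc k \<le> snd p}
      = cball 0 (real k) \<inter> {p. 1 / Suc k \<le> snd p}" by (auto simp: mem_cball_0)
  moreover have "closed {p :: (real^'m) \<times> real. 1 / Suc k \<le> snd p}"
    by (intro closed_Collect_le continuous_intros)
  ultimately show ?thesis by (simp add: compact_Int_closed)
qed

lemma sigma_bwd:
  fixes A :: "((real^'m) \<times> real) set"
  assumes "sigma_compact_top (subtopology (tauA A) Ln)"
  shows "sigma_compact_top (tauA A)"
proof -
  have tL: "topspace (subtopology (tauA A) Ln) = Ln" by (auto simp: topspace_tauA Xn_def)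
  obtain U where U: "countable U" "\<And>u. u \<in> U \<Longrightarrow> compactin (subtopology (tauA A) Ln) u" "\<Union>U = Ln"
    using assms unfolding sigma_compact_top_def union_of_def tL by blast
  define K where "K = (\<lambda>k::nat. {p :: (real^'m) \<times> real. norm p \<le> real k \<and> 1 / Suc k \<le> snd p})"
  have KP: "K k \<subseteq> Pn" for k
  proof
    fix p assume "p \<in> K k"
    then have "1 / Suc k \<le> snd p" by (auto simp: K_def)
    moreover have "0 < 1 / real (Suc k)" by simp
    ultimately have "0 < snd p" by linarith
    then show "p \<in> Pn" by (simp add: Pn_def)
  qed
  have Kc: "compactin (tauA A) (K k)" for k
  proof -
    have "compactin (top_of_set Pn) (K k)"
      using compact_K[of k] KP[of k] by (simp add: compactin_subtopology K_def)
    then have "compactin (subtopology (tauA A) Pn) (K k)" by (simp add: sub_Pn)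
    then show ?thesis by (simp add: compactin_subtopology)
  qed
  have KU: "\<Union>(range K) = Pn"
  proof (intro equalityI subsetI)
    fix p assume "p \<in> \<Union>(range K)" then show "p \<in> Pn" using KP by blast
  next
    fix p :: "(real^'m) \<times> real" assume "p \<in> Pn"
    then have sp: "snd p > 0" by (simp add: Pn_def)
    obtain k :: nat where k: "max (norm p) (1 / snd p) < k" using reals_Archimedean2 by blast
    then have "norm p \<le> real k" by simp
    moreover have "1 / snd p < real (Suc k)" using k by simp
    then have "1 / Suc k \<le> snd p" using sp by (simp add: field_simps)
    ultimately show "p \<in> \<Union>(range K)" by (auto simp: K_def)
  qed
  show ?thesis
    unfolding sigma_compact_top_def union_of_def
  proof (intro exI[of _ "U \<union> range K"] conjI)
    show "countable (U \<union> range K)" using U by simp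
    show "U \<union> range K \<subseteq> Collect (compactin (tauA A))"
      using U(2) Kc compactin_subtopology by blast
    show "\<Union>(U \<union> range K) = topspace (tauA A)"
      using U(3) KU by (auto simp: topspace_tauA Xn_def)
  qed
qed

lemma sigma_fwd:
  fixes A :: "((real^'m) \<times> real) set"
  assumes "sigma_compact_top (tauA A)"
  shows "sigma_compact_top (subtopology (tauA A) Ln)"
proof -
  have tL: "topspace (subtopology (tauA A) Ln) = Ln" by (auto simp: topspace_tauA Xn_def)
  obtain U where U: "countable U" "\<And>u. u \<in> U \<Longrightarrow> compactin (tauA A) u" "\<Union>U = Xn"
    using assms unfolding sigma_compact_top_def union_of_def topspace_tauA by blast
  show ?thesis
    unfolding sigma_compact_top_def union_of_def tL
  proof (intro exI[of _ "(\<lambda>u. Ln \<inter> u) ` U"] conjI)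
    show "countable ((\<lambda>u. Ln \<inter> u) ` U)" using U by simp
    show "(\<lambda>u. Ln \<inter> u) ` U \<subseteq> Collect (compactin (subtopology (tauA A) Ln))"
      using U(2) closed_Int_compactin[OF closedin_Ln] compactin_subtopology by blast
    show "\<Union>((\<lambda>u. Ln \<inter> u) ` U) = Ln" using U(3) by (auto simp: Xn_def)
  qed
qed

theorem mainTheorem4:
  fixes A :: "((real^'m) \<times> real) set"
  assumes "A \<subseteq> Ln"
  shows "(perfect_top (tauA A) \<longleftrightarrow> perfect_top (subtopology (tauA A) Ln))
       \<and> (Lindelof_space (tauA A) \<longleftrightarrow> Lindelof_space (subtopology (tauA A) Ln))
       \<and> (sigma_compact_top (tauA A) \<longleftrightarrow> sigma_compact_top (subtopology (tauA A) Ln))"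
proof -
  have "Lindelof_space (subtopology (tauA A) Ln)" if "Lindelof_space (tauA A)"
    using Lindelof_space_closedin_subtopology[OF that closedin_Ln] .
  then have l: "Lindelof_space (tauA A) \<longleftrightarrow> Lindelof_space (subtopology (tauA A) Ln)"
    using Lindelof_bwd[of A] by blast
  have p: "perfect_top (tauA A) \<longleftrightarrow> perfect_top (subtopology (tauA A) Ln)"
    using perfect_fwd[of A] perfect_bwd[of A] by blast
  have s: "sigma_compact_top (tauA A) \<longleftrightarrow> sigma_compact_top (subtopology (tauA A) Ln)"
    using sigma_fwd[of A] sigma_bwd[of A] by blast
  show ?thesis using l p s by blast
qed

end
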